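(* Let $p>1$, $q=\frac{p}{p-1}$ and $0<a<b$. Then $$\left|\frac{I(a,b)}{G(a,b)}\right|\le \exp\!\left(\frac{b-a}{2}\,\bigl(H(|a|^q,|b|^q)\bigr)^{-1/q}\right).$$
   Context: For positive $x,y$: the geometric mean is $G(x,y)=\sqrt{xy}$; the harmonic mean is $H(x,y)=\frac{2xy}{x+y}$; the identric mean is $I(x,y)=x$ if $x=y$ and $I(x,y)=\frac1e\left(\frac{y^y}{x^x}\right)^{\frac{1}{y-x}}$ if $x\ne y$. *)

theory Defs
  imports Complex_Main
begin

definition geom_mean :: "real \<Rightarrow> real \<Rightarrow> real" where
  "geom_mean x y = sqrt (x * y)"

definition harm_mean :: "real \<Rightarrow> real \<Rightarrow> real" where
  "harm_mean x y = 2 * x * y / (x + y)"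

definition identric_mean :: "real \<Rightarrow> real \<Rightarrow> real" where
  "identric_mean x y = (if x = y then x
     else (1 / exp 1) * ((y powr y) / (x powr x)) powr (1 / (y - x)))"

end

theory Submission
  imports Defs
begin

lemma key_ln:
  fixes s :: real assumes "s \<ge> 1"
  shows "2 * ln s \<le> s - 1 / s"
proof -
  let ?f = "\<lambda>x::real. x - 1 / x - 2 * ln x"
  have "?f 1 \<le> ?f s"
  proof (rule DERIV_nonneg_imp_increasing_open[OF assms])
    fix x :: real assume x: "1 < x" "x < s"
    have "DERIV ?f x :> 1 + 1 / x^2 - 2 / x"
      using x by (auto intro!: derivative_eq_intros simp: power2_eq_square field_simps)
    moreover have "1 + 1 / x^2 - 2 / x = (1 - 1/x)^2"
      using x by (simp add: power2_eq_square field_simps)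
    ultimately show "\<exists>y. DERIV ?f x :> y \<and> y \<ge> 0" by auto
  next
    show "continuous_on {1..s} ?f"
      by (intro continuous_intros) auto
  qed
  thus ?thesis by simp
qed

lemma key_ln2:
  fixes a b :: real assumes "0 < a" "a \<le> b"
  shows "ln b - ln a \<le> (b - a) / sqrt (a * b)"
proof -
  define s where "s = sqrt (b / a)"
  have s1: "s \<ge> 1" using assms by (simp add: s_def)
  have ss: "s^2 = b / a" using assms by (simp add: s_def)
  have "ln b - ln a = ln (b / a)" using assms by (simp add: ln_div)
  also have "\<dots> = 2 * ln s"
  proof -
    have "ln (s^2) = 2 * ln s" using s1 by (simp add: ln_realpow)
    thus ?thesis using ss by simp
  qed
  also have "\<dots> \<le> s - 1 / s" by (rule key_ln[OF s1])
  also have "s - 1/s = (b - a) / sqrt (a * b)"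
  proof -
    have "sqrt (a*b) = a * s"
    proof -
      have "a * b = a^2 * (b / a)" using assms by (simp add: power2_eq_square)
      hence "sqrt (a*b) = sqrt (a^2) * sqrt (b/a)" by (metis real_sqrt_mult)
      thus ?thesis using assms by (simp add: s_def)
    qed
    thus ?thesis using assms s1 ss by (simp add: field_simps power2_eq_square)
  qed
  finally show ?thesis .
qed

theorem proposition2:
  fixes p q a b :: real
  assumes "p > 1" and "q = p / (p - 1)" and "0 < a" and "a < b"
  shows "\<bar>identric_mean a b / geom_mean a b\<bar>
           \<le> exp ((b - a) / 2 * (harm_mean (\<bar>a\<bar> powr q) (\<bar>b\<bar> powr q)) powr (- 1 / q))"
proof -
  have a: "0 < a" and b: "0 < b" using assms by auto
  have p1: "p - 1 > 0" using assms(1) by simp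
  have q1: "q \<ge> 1" using assms(2) p1 by (simp add: le_divide_eq_1)
  have qpos: "q > 0" using q1 by simp
  define L where "L = ln b - ln a"
  have IM: "identric_mean a b = exp ((b * ln b - a * ln a) / (b - a) - 1)"
  proof -
    have "ln (b powr b / a powr a) = b * ln b - a * ln a" using a b by (simp add: ln_div ln_powr)
    hence "(b powr b / a powr a) powr (1 / (b - a)) = exp ((b * ln b - a * ln a) / (b - a))"
      using a b by (simp add: powr_def)
    thus ?thesis using assms by (simp add: identric_mean_def exp_diff)
  qed
  have GM: "geom_mean a b = exp ((ln a + ln b) / 2)"
  proof -
    have "sqrt (a * b) = (a * b) powr (1/2)" using a b by (simp add: powr_half_sqrt)
    also have "\<dots> = exp ((ln a + ln b) / 2)" using a b by (simp add: powr_def ln_mult)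
    finally show ?thesis by (simp add: geom_mean_def)
  qed
  have E: "(b * ln b - a * ln a) / (b - a) - 1 - (ln a + ln b) / 2 = L * (a + b) / (2 * (b - a)) - 1"
    using assms by (simp add: L_def field_simps)
  have K: "L \<le> (b - a) / sqrt (a * b)" unfolding L_def using key_ln2 a assms(4) by simp
  have "L * (a + b) / (2 * (b - a)) \<le> ((b - a) / sqrt (a * b)) * (a + b) / (2 * (b - a))"
    using K a b assms(4) by (intro divide_right_mono mult_right_mono) auto
  also have "\<dots> = (a + b) / (2 * sqrt (a * b))" using assms a b by (simp add: field_simps)
  finally have E2: "L * (a + b) / (2 * (b - a)) \<le> (a + b) / (2 * sqrt (a * b))" .
  define x where "x = sqrt a"
  define y where "y = sqrt b"
  have x: "x > 0" and y: "y > 0" using a b by (auto simp: x_def y_def)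
  have ax: "a = x^2" and byy: "b = y^2" using a b by (auto simp: x_def y_def)
  have sab: "sqrt (a * b) = x * y" by (simp add: x_def y_def real_sqrt_mult)
  have xy: "x < y" using assms(4) by (simp add: x_def y_def)
  have E3: "(a + b) / (2 * sqrt (a * b)) - 1 \<le> (b - a) / (4 * a)"
  proof -
    have fac: "0 \<le> (y - x) * (y^2 - x*y + 2*x^2)"
    proof -
      have "y^2 - x*y + 2*x^2 = (y - x/2)^2 + 7/4*x^2" by (simp add: power2_eq_square algebra_simps)
      moreover have "0 \<le> (y - x/2)^2 + 7/4*x^2" by (intro add_nonneg_nonneg) auto
      ultimately have "0 \<le> y^2 - x*y + 2*x^2" by linarith
      thus ?thesis using xy by simp
    qed
    have "(a + b) / (2 * sqrt (a * b)) - 1 - (b - a) / (4 * a)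
          = (x^2 + y^2) / (2 * (x * y)) - 1 - (y^2 - x^2) / (4 * x^2)"
      unfolding sab by (simp add: ax byy)
    also have "\<dots> = - ((y - x) * (y^2 - x*y + 2*x^2)) / (4 * x^2 * y)"
      using x y by (simp add: divide_simps) (simp add: power2_eq_square power3_eq_cube algebra_simps)
    also have "\<dots> \<le> 0" using fac x y by (simp add: divide_nonpos_pos)
    finally show ?thesis by linarith
  qed
  define H where "H = harm_mean (\<bar>a\<bar> powr q) (\<bar>b\<bar> powr q)"
  have apq: "a powr q > 0" "b powr q > 0" using a b by auto
  have "0 < 2 * a powr q * b powr q / (a powr q + b powr q)" using apq by (intro divide_pos_pos mult_pos_pos add_pos_pos) auto
  hence Hpos: "H > 0" using a b by (simp add: H_def harm_mean_def)
  have Hle: "H \<le> 2 * a powr q"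
  proof -
    have "H = 2 * a powr q * (b powr q / (a powr q + b powr q))"
      using a b by (simp add: H_def harm_mean_def)
    also have "\<dots> \<le> 2 * a powr q * 1"
    proof (rule mult_left_mono)
      have "b powr q \<le> 1 * (a powr q + b powr q)" using apq by simp
      thus "b powr q / (a powr q + b powr q) \<le> 1" using apq by (simp add: pos_divide_le_eq add_pos_pos)
    qed (use apq in linarith)
    finally show ?thesis by simp
  qed
  have "H powr (1/q) \<le> (2 * a powr q) powr (1/q)"
    using Hle Hpos qpos by (intro powr_mono2) auto
  also have "\<dots> = 2 powr (1/q) * a"
    using a qpos by (simp add: powr_mult powr_powr)
  also have "\<dots> \<le> 2 * a"
  proof -
    have "2 powr (1/q) \<le> 2 powr 1" using q1 by (intro powr_mono) auto
    thus ?thesis using a by simp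
  qed
  finally have HP: "H powr (1/q) \<le> 2 * a" .
  have HPpos: "H powr (1/q) > 0" using Hpos by simp
  have "1 / (2 * a) \<le> H powr (- 1 / q)"
  proof -
    have "H powr (- 1 / q) = 1 / H powr (1/q)"
      using Hpos by (simp add: powr_minus_divide)
    moreover have "1 / (2 * a) \<le> 1 / H powr (1/q)"
      by (rule frac_le) (use HP HPpos in auto)
    ultimately show ?thesis by simp
  qed
  then have R: "(b - a) / (4 * a) \<le> (b - a) / 2 * H powr (- 1 / q)"
  proof -
    have "(b - a) / 2 * (1 / (2 * a)) \<le> (b - a) / 2 * H powr (- 1 / q)"
      using \<open>1 / (2 * a) \<le> H powr (- 1 / q)\<close> assms(4) by (intro mult_left_mono) auto
    moreover have "(b - a) / 2 * (1 / (2 * a)) = (b - a) / (4 * a)" by simp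
    ultimately show ?thesis by simp
  qed
  have IGpos: "identric_mean a b / geom_mean a b > 0" unfolding IM GM by simp
  have "\<bar>identric_mean a b / geom_mean a b\<bar>
        = exp ((b * ln b - a * ln a) / (b - a) - 1 - (ln a + ln b) / 2)"
    using IGpos unfolding IM GM by (simp add: exp_diff)
  also have "\<dots> \<le> exp ((b - a) / 2 * H powr (- 1 / q))"
  proof -
    have "(b * ln b - a * ln a) / (b - a) - 1 - (ln a + ln b) / 2 \<le> (b - a) / 2 * H powr (- 1 / q)"
      using E E2 E3 R by linarith
    thus ?thesis by (rule exp_mono)
  qed
  finally show ?thesis unfolding H_def .
qed

end
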